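(* Let $P$ and $Q$ be posets. If the product space $\Sigma P\times \Sigma Q$ is a Fréchet space, then the Scott topology of the product poset $P\times Q$ coincides with the product topology of $\Sigma P$ and $\Sigma Q$, i.e. $\Sigma(P\times Q)=\Sigma P\times\Sigma Q$.
   Context: For a poset $P$, a subset $U\subseteq P$ is Scott open if $U$ is an upper set and for every directed $D\subseteq P$ whose supremum $\bigvee D$ exists, $\bigvee D\in U$ implies $D\cap U\neq\emptyset$. The Scott open sets form the Scott topology $\sigma(P)$, and $\Sigma P=(P,\sigma(P))$. The product poset $P\times Q$ carries the coordinatewise order. A topological space $X$ is a Fréchet space if for every subset $A\subseteq X$ and every $x$ in the closure of $A$, there is a sequence $(x_n)_{n\in\omega}$ of elements of $A$ converging to $x$. *)

theory Defs
  imports "HOL-Analysis.Analysis"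
begin

definition directed_rel :: "('a \<Rightarrow> 'a \<Rightarrow> bool) \<Rightarrow> 'a set \<Rightarrow> bool" where
  "directed_rel le D \<longleftrightarrow> D \<noteq> {} \<and> (\<forall>x\<in>D. \<forall>y\<in>D. \<exists>z\<in>D. le x z \<and> le y z)"

definition is_sup_rel :: "('a \<Rightarrow> 'a \<Rightarrow> bool) \<Rightarrow> 'a set \<Rightarrow> 'a \<Rightarrow> bool" where
  "is_sup_rel le D s \<longleftrightarrow> (\<forall>x\<in>D. le x s) \<and> (\<forall>u. (\<forall>x\<in>D. le x u) \<longrightarrow> le s u)"

definition scott_open_rel :: "('a \<Rightarrow> 'a \<Rightarrow> bool) \<Rightarrow> 'a set \<Rightarrow> bool" where
  "scott_open_rel le U \<longleftrightarrow>
     (\<forall>x y. x \<in> U \<longrightarrow> le x y \<longrightarrow> y \<in> U) \<and>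
     (\<forall>D s. directed_rel le D \<longrightarrow> is_sup_rel le D s \<longrightarrow> s \<in> U \<longrightarrow> D \<inter> U \<noteq> {})"

definition scott_topology_rel :: "('a \<Rightarrow> 'a \<Rightarrow> bool) \<Rightarrow> 'a topology" where
  "scott_topology_rel le = topology (scott_open_rel le)"

abbreviation scott_topology :: "('a::order) topology" where
  "scott_topology \<equiv> scott_topology_rel (\<le>)"

definition prod_le :: "('a::order) \<times> ('b::order) \<Rightarrow> 'a \<times> 'b \<Rightarrow> bool" where
  "prod_le p q \<longleftrightarrow> fst p \<le> fst q \<and> snd p \<le> snd q"

definition frechet_space :: "'a topology \<Rightarrow> bool" where
  "frechet_space X \<longleftrightarrow>
     (\<forall>A x. A \<subseteq> topspace X \<longrightarrow> x \<in> X closure_of A \<longrightarrow>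
        (\<exists>s::nat \<Rightarrow> 'a. (\<forall>n. s n \<in> A) \<and> limitin X s x sequentially))"

end

theory Submission
  imports Defs
begin

lemma istop_scott: "istopology (scott_open_rel le)"
  unfolding istopology_def
proof (intro conjI allI impI)
  fix S T assume S: "scott_open_rel le S" and T: "scott_open_rel le T"
  show "scott_open_rel le (S \<inter> T)"
    unfolding scott_open_rel_def
  proof (intro conjI allI impI)
    fix x y assume "x \<in> S \<inter> T" "le x y" then show "y \<in> S \<inter> T"
      using S T unfolding scott_open_rel_def by blast
  next
    fix D s assume d: "directed_rel le D" and sp: "is_sup_rel le D s" and "s \<in> S \<inter> T"
    then obtain d1 d2 where "d1 \<in> D \<inter> S" "d2 \<in> D \<inter> T"
      using S T unfolding scott_open_rel_def by blast
    then obtain z where "z \<in> D" "le d1 z" "le d2 z" using d unfolding directed_rel_def by blast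
    then show "D \<inter> (S \<inter> T) \<noteq> {}"
      using S T \<open>d1 \<in> D \<inter> S\<close> \<open>d2 \<in> D \<inter> T\<close> unfolding scott_open_rel_def by blast
  qed
next
  fix K assume K: "\<forall>S\<in>K. scott_open_rel le S"
  show "scott_open_rel le (\<Union>K)"
    unfolding scott_open_rel_def
  proof (intro conjI allI impI)
    fix x y assume "x \<in> \<Union>K" "le x y" then show "y \<in> \<Union>K"
      using K unfolding scott_open_rel_def by blast
  next
    fix D s assume "directed_rel le D" "is_sup_rel le D s" "s \<in> \<Union>K"
    then show "D \<inter> \<Union>K \<noteq> {}"
      using K unfolding scott_open_rel_def by blast
  qed
qed

lemma openin_scott: "openin (scott_topology_rel le) U \<longleftrightarrow> scott_open_rel le U"
  unfolding scott_topology_rel_def by (simp add: topology_inverse'[OF istop_scott])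

lemma topspace_scott [simp]: "topspace (scott_topology_rel le) = UNIV"
proof -
  have "scott_open_rel le UNIV" unfolding scott_open_rel_def directed_rel_def by auto
  then show ?thesis unfolding topspace_def using openin_scott by blast
qed

lemma directed_finite_ub:
  fixes D :: "'a::order set"
  assumes d: "directed_rel (\<le>) D" and F: "finite F" "F \<subseteq> D"
  shows "\<exists>z\<in>D. \<forall>f\<in>F. f \<le> z"
  using F
proof (induction F rule: finite_induct)
  case empty then show ?case using d unfolding directed_rel_def by auto
next
  case (insert x F)
  then obtain z where z: "z \<in> D" "\<forall>f\<in>F. f \<le> z" by auto
  obtain w where "w \<in> D" "x \<le> w" "z \<le> w" using d z insert.prems unfolding directed_rel_def by blast
  then show ?case using z order_trans by blast
qed

lemma section2_open:
  fixes U :: "('a::order \<times> 'b::order) set"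
  assumes U: "scott_open_rel prod_le U"
  shows "scott_open_rel (\<le>) {q. (p,q) \<in> U}"
  unfolding scott_open_rel_def
proof (intro conjI allI impI)
  fix x y assume "x \<in> {q. (p,q) \<in> U}" "x \<le> y" then show "y \<in> {q. (p,q) \<in> U}"
    using U unfolding scott_open_rel_def prod_le_def by fastforce
next
  fix D t assume d: "directed_rel (\<le>) D" and sp: "is_sup_rel (\<le>) D t" and "t \<in> {q. (p,q) \<in> U}"
  let ?D = "(\<lambda>x. (p,x)) ` D"
  have "directed_rel prod_le ?D" using d unfolding directed_rel_def prod_le_def by auto
  moreover have "is_sup_rel prod_le ?D (p,t)"
    using sp d unfolding is_sup_rel_def directed_rel_def prod_le_def by auto
  ultimately have "?D \<inter> U \<noteq> {}" using U \<open>t \<in> _\<close> unfolding scott_open_rel_def by blast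
  then show "D \<inter> {q. (p,q) \<in> U} \<noteq> {}" by auto
qed

lemma section1_open:
  fixes U :: "('a::order \<times> 'b::order) set"
  assumes U: "scott_open_rel prod_le U"
  shows "scott_open_rel (\<le>) {p. (p,q) \<in> U}"
  unfolding scott_open_rel_def
proof (intro conjI allI impI)
  fix x y assume "x \<in> {p. (p,q) \<in> U}" "x \<le> y" then show "y \<in> {p. (p,q) \<in> U}"
    using U unfolding scott_open_rel_def prod_le_def by fastforce
next
  fix D t assume d: "directed_rel (\<le>) D" and sp: "is_sup_rel (\<le>) D t" and "t \<in> {p. (p,q) \<in> U}"
  let ?D = "(\<lambda>x. (x,q)) ` D"
  have "directed_rel prod_le ?D" using d unfolding directed_rel_def prod_le_def by auto
  moreover have "is_sup_rel prod_le ?D (t,q)"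
    using sp d unfolding is_sup_rel_def directed_rel_def prod_le_def by auto
  ultimately have "?D \<inter> U \<noteq> {}" using U \<open>t \<in> _\<close> unfolding scott_open_rel_def by blast
  then show "D \<inter> {p. (p,q) \<in> U} \<noteq> {}" by auto
qed

lemma limit_ev:
  assumes "limitin (scott_topology_rel le) s l F" "scott_open_rel le V" "l \<in> V"
  shows "eventually (\<lambda>n. s n \<in> V) F"
  using assms unfolding limitin_def openin_scott by blast

lemma main_seq:
  fixes U :: "('a::order \<times> 'b::order) set"
  assumes U: "scott_open_rel prod_le U" and ab: "(a,b) \<in> U"
    and x: "limitin scott_topology x a sequentially"
    and y: "limitin scott_topology y b sequentially"
  shows "\<exists>n. (x n, y n) \<in> U"
proof -
  have "eventually (\<lambda>n. y n \<in> {q. (a,q) \<in> U}) sequentially"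
    using limit_ev[OF y section2_open[OF U]] ab by auto
  then obtain N1 where N1: "\<And>n. n \<ge> N1 \<Longrightarrow> (a, y n) \<in> U"
    unfolding eventually_sequentially by auto
  define V where "V = {p. (p,b) \<in> U \<and> (\<forall>n\<ge>N1. (p, y n) \<in> U)}"
  have aV: "a \<in> V" using ab N1 V_def by auto
  have Vo: "scott_open_rel (\<le>) V"
    unfolding scott_open_rel_def
  proof (intro conjI allI impI)
    fix p p' :: 'a assume "p \<in> V" "p \<le> p'"
    then show "p' \<in> V" using U unfolding V_def scott_open_rel_def prod_le_def by fastforce
  next
    fix D s assume d: "directed_rel (\<le>) D" and sp: "is_sup_rel (\<le>) D s" and "s \<in> V"
    then have "s \<in> {p. (p,b) \<in> U}" unfolding V_def by auto
    then obtain d0 where d0: "d0 \<in> D" "(d0,b) \<in> U"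
      using section1_open[OF U, of b] d sp unfolding scott_open_rel_def by blast
    have "eventually (\<lambda>n. y n \<in> {q. (d0,q) \<in> U}) sequentially"
      using limit_ev[OF y section2_open[OF U]] d0 by auto
    then obtain N2 where N2: "\<And>n. n \<ge> N2 \<Longrightarrow> (d0, y n) \<in> U"
      unfolding eventually_sequentially by auto
    have "\<forall>n\<in>{N1..<N2}. \<exists>e\<in>D. (e, y n) \<in> U"
    proof
      fix n assume "n \<in> {N1..<N2}"
      then have "s \<in> {p. (p, y n) \<in> U}" using \<open>s \<in> V\<close> unfolding V_def by auto
      then show "\<exists>e\<in>D. (e, y n) \<in> U"
        using section1_open[OF U, of "y n"] d sp unfolding scott_open_rel_def by blast
    qed
    then obtain e where e: "\<And>n. n \<in> {N1..<N2} \<Longrightarrow> e n \<in> D \<and> (e n, y n) \<in> U" by metis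
    have "finite (insert d0 (e ` {N1..<N2}))" by auto
    moreover have "insert d0 (e ` {N1..<N2}) \<subseteq> D" using e d0 by auto
    ultimately obtain z where z: "z \<in> D" "\<forall>f\<in>insert d0 (e ` {N1..<N2}). f \<le> z"
      using directed_finite_ub[OF d] by blast
    have up: "\<And>p q. (p,q) \<in> U \<Longrightarrow> p \<le> z \<Longrightarrow> (z,q) \<in> U"
      using U unfolding scott_open_rel_def prod_le_def by fastforce
    have "z \<in> V" unfolding V_def
    proof (intro CollectI conjI allI impI)
      show "(z,b) \<in> U" using up d0 z by auto
    next
      fix n assume "N1 \<le> n"
      show "(z, y n) \<in> U"
      proof (cases "n < N2")
        case True then show ?thesis using e[of n] z up \<open>N1 \<le> n\<close> by auto
      next
        case False then show ?thesis using N2[of n] up[of d0 "y n"] z False by auto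
      qed
    qed
    then show "D \<inter> V \<noteq> {}" using z by auto
  qed
  obtain N3 where N3: "\<And>n. n \<ge> N3 \<Longrightarrow> x n \<in> V"
    using limit_ev[OF x Vo aV] unfolding eventually_sequentially by auto
  have "x (max N1 N3) \<in> V" using N3 by auto
  then have "(x (max N1 N3), y (max N1 N3)) \<in> U" unfolding V_def by auto
  then show ?thesis by blast
qed

theorem theorem3p5:
  assumes "frechet_space (prod_topology (scott_topology :: 'a::order topology) (scott_topology :: 'b::order topology))"
  shows "scott_topology_rel (prod_le :: 'a \<times> 'b \<Rightarrow> 'a \<times> 'b \<Rightarrow> bool)
           = prod_topology (scott_topology :: 'a::order topology) (scott_topology :: 'b::order topology)"
  unfolding topology_eq
proof (intro allI iffI)
  fix U :: "('a \<times> 'b) set"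
  let ?X = "prod_topology (scott_topology :: 'a::order topology) (scott_topology :: 'b::order topology)"
  assume "openin (scott_topology_rel prod_le) U"
  then have U: "scott_open_rel prod_le U" by (simp add: openin_scott)
  let ?C = "UNIV - U"
  have "?X closure_of ?C \<subseteq> ?C"
  proof
    fix z assume z: "z \<in> ?X closure_of ?C"
    obtain s where s: "\<forall>n. s n \<in> ?C" "limitin ?X s z sequentially"
      using assms z unfolding frechet_space_def by (metis subset_UNIV topspace_prod_topology topspace_scott UNIV_Times_UNIV)
    have "limitin scott_topology (fst \<circ> s) (fst z) sequentially"
         "limitin scott_topology (snd \<circ> s) (snd z) sequentially"
      using s(2) limitin_pairwise by blast+
    show "z \<in> ?C"
    proof (rule ccontr)
      assume "z \<notin> ?C"
      then have "z \<in> U" by simp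
      have "\<exists>n. ((fst \<circ> s) n, (snd \<circ> s) n) \<in> U"
        using main_seq[OF U, of "fst z" "snd z" "fst \<circ> s" "snd \<circ> s"] \<open>z \<in> U\<close> \<open>limitin _ (fst \<circ> s) _ _\<close> \<open>limitin _ (snd \<circ> s) _ _\<close>
        by (metis prod.collapse)
      then show False using s(1) by auto
    qed
  qed
  then have "closedin ?X ?C" using closure_of_subset_eq[of ?C ?X] by simp
  then show "openin ?X U" by (simp add: openin_closedin_eq)
next
  fix U :: "('a \<times> 'b) set"
  assume "openin (prod_topology scott_topology scott_topology) U"
  then have o: "\<And>x y. (x,y) \<in> U \<Longrightarrow> \<exists>V W. scott_open_rel (\<le>) V \<and> scott_open_rel (\<le>) W \<and> x \<in> V \<and> y \<in> W \<and> V \<times> W \<subseteq> U"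
    unfolding openin_prod_topology_alt openin_scott by blast
  show "openin (scott_topology_rel prod_le) U"
    unfolding openin_scott scott_open_rel_def
  proof (intro conjI allI impI)
    fix p q :: "'a \<times> 'b" assume "p \<in> U" "prod_le p q"
    then obtain V W where "scott_open_rel (\<le>) V" "scott_open_rel (\<le>) W" "fst p \<in> V" "snd p \<in> W" "V \<times> W \<subseteq> U"
      using o[of "fst p" "snd p"] by auto
    then show "q \<in> U" using \<open>prod_le p q\<close> unfolding scott_open_rel_def prod_le_def
      by (metis mem_Sigma_iff prod.collapse subsetD)
  next
    fix D and st :: "'a \<times> 'b" assume d: "directed_rel prod_le D" and sp: "is_sup_rel prod_le D st" and "st \<in> U"
    obtain s t where st: "st = (s,t)" by fastforce
    then obtain V W where VW: "scott_open_rel (\<le>) V" "scott_open_rel (\<le>) W" "s \<in> V" "t \<in> W" "V \<times> W \<subseteq> U"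
      using o[of s t] \<open>st \<in> U\<close> by auto
    have d1: "directed_rel (\<le>) (fst ` D)" using d unfolding directed_rel_def prod_le_def by fastforce
    have d2: "directed_rel (\<le>) (snd ` D)" using d unfolding directed_rel_def prod_le_def by fastforce
    have s1: "is_sup_rel (\<le>) (fst ` D) s"
      unfolding is_sup_rel_def
    proof (intro conjI allI impI ballI)
      fix x assume "x \<in> fst ` D" then show "x \<le> s" using sp st unfolding is_sup_rel_def prod_le_def by auto
    next
      fix u assume "\<forall>x\<in>fst ` D. x \<le> u"
      then have "\<forall>x\<in>D. prod_le x (u,t)" using sp st unfolding is_sup_rel_def prod_le_def by auto
      then show "s \<le> u" using sp st unfolding is_sup_rel_def prod_le_def by fastforce
    qed
    have s2: "is_sup_rel (\<le>) (snd ` D) t"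
      unfolding is_sup_rel_def
    proof (intro conjI allI impI ballI)
      fix x assume "x \<in> snd ` D" then show "x \<le> t" using sp st unfolding is_sup_rel_def prod_le_def by auto
    next
      fix u assume "\<forall>x\<in>snd ` D. x \<le> u"
      then have "\<forall>x\<in>D. prod_le x (s,u)" using sp st unfolding is_sup_rel_def prod_le_def by auto
      then show "t \<le> u" using sp st unfolding is_sup_rel_def prod_le_def by fastforce
    qed
    obtain e1 where e1: "e1 \<in> D" "fst e1 \<in> V" using VW(1,3) d1 s1 unfolding scott_open_rel_def by blast
    obtain e2 where e2: "e2 \<in> D" "snd e2 \<in> W" using VW(2,4) d2 s2 unfolding scott_open_rel_def by blast
    obtain e where e: "e \<in> D" "prod_le e1 e" "prod_le e2 e" using d e1 e2 unfolding directed_rel_def by blast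
    have "fst e \<in> V" "snd e \<in> W" using e e1 e2 VW unfolding scott_open_rel_def prod_le_def by blast+
    then have "e \<in> U" using VW(5) by (metis mem_Sigma_iff prod.collapse subsetD)
    then show "D \<inter> U \<noteq> {}" using e by auto
  qed
qed

end
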